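(* For every $0<s\le1$, $$\min\Big\{1-\sum_{i=1}^dp_i^2\;:\;p\in\Delta_d,\ \mathcal{E}_\star(p)\ge s\Big\}=s\,\frac{d-1}{d}.$$
   Context: $d\ge2$. $\Delta_d$ is the set of probability vectors $p=(p_1,\dots,p_d)$, $p_i\ge0$, $\sum_ip_i=1$. With the stellar spectrum $\lambda_j=e^{i\theta_j}$, $\theta_j=\frac{(d-2j+1)\pi}{d}$, define for a probability vector $p$: $\mathcal{E}_\star(p)=\min_{\sigma\in S_d}\big(1-\big|\sum_{i=1}^d\lambda_ip_{\sigma(i)}\big|^2\big)$. *)

theory Defs
  imports Complex_Main "HOL-Combinatorics.Permutations"
begin

definition prob_simplex :: "nat \<Rightarrow> (nat \<Rightarrow> real) set" where
  "prob_simplex d = {p. (\<forall>i\<in>{1..d}. 0 \<le> p i) \<and> (\<Sum>i=1..d. p i) = 1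
                        \<and> (\<forall>i. i \<notin> {1..d} \<longrightarrow> p i = 0)}"

definition stellar_lambda :: "nat \<Rightarrow> nat \<Rightarrow> complex" where
  "stellar_lambda d j = cis ((real d - 2 * real j + 1) * pi / real d)"

definition E_star :: "nat \<Rightarrow> (nat \<Rightarrow> real) \<Rightarrow> real" where
  "E_star d p = Min ((\<lambda>\<sigma>. 1 - (cmod (\<Sum>i=1..d. stellar_lambda d i * complex_of_real (p (\<sigma> i))))^2)
                     ` {\<sigma>. \<sigma> permutes {1..d}})"

end

theory Submission
  imports Defs
begin

lemma lam_sum:
  assumes "d \<ge> 2"
  shows "(\<Sum>j=1..d. stellar_lambda d j) = 0"
proof -
  define r where "r = cis (- 2 * pi / real d)"
  define c where "c = cis ((real d + 1) * pi / real d)"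
  have dpos: "real d > 0" using assms by simp
  have eq: "stellar_lambda d j = c * r ^ j" for j
    unfolding stellar_lambda_def c_def r_def DeMoivre cis_mult
    by (rule arg_cong[where f=cis]) (use dpos in \<open>simp add: field_simps\<close>)
  have "real d * (- 2 * pi / real d) = - (2 * pi)" using dpos by simp
  hence rd: "r ^ d = 1"
    unfolding r_def DeMoivre by (simp flip: cis_inverse)
  have "cos (2 * pi / real d) < cos 0"
      apply (rule cos_monotone_0_pi)
      using assms dpos by (auto simp: field_simps)
  hence "cos (- 2 * pi / real d) \<noteq> 1" by simp
  hence r1: "r \<noteq> 1" unfolding r_def
    by (auto simp: cis_def complex_eq_iff)
  have "(\<Sum>j=1..d. r ^ j) = 0"
    using r1 assms rd by (simp add: sum_gp)
  then show ?thesis by (simp add: eq sum_distrib_left[symmetric])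
qed

lemma norm_sq_expand:
  fixes q :: "nat \<Rightarrow> real" and l :: "nat \<Rightarrow> complex"
  shows "(cmod (\<Sum>i\<in>A. l i * complex_of_real (q i)))^2 = (\<Sum>i\<in>A. \<Sum>j\<in>A. Re (l i * cnj (l j)) * q i * q j)"
proof -
  let ?z = "\<Sum>i\<in>A. l i * complex_of_real (q i)"
  have "complex_of_real ((cmod ?z)^2) = ?z * cnj ?z" by (rule complex_norm_square)
  also have "\<dots> = (\<Sum>i\<in>A. \<Sum>j\<in>A. (l i * complex_of_real (q i)) * cnj (l j * complex_of_real (q j)))"
    by (simp add: cnj_sum sum_product)
  finally have "(cmod ?z)^2 = Re (\<Sum>i\<in>A. \<Sum>j\<in>A. (l i * complex_of_real (q i)) * cnj (l j * complex_of_real (q j)))"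
    by (metis Re_complex_of_real)
  also have "\<dots> = (\<Sum>i\<in>A. \<Sum>j\<in>A. Re (l i * cnj (l j)) * q i * q j)"
    by (simp add: Re_sum mult_ac distrib_left sum.distrib)
  finally show ?thesis .
qed

lemma perm_diag:
  assumes "i \<in> A" "i' \<in> A"
  shows "(\<Sum>\<sigma>\<in>{\<sigma>. \<sigma> permutes A}. g (\<sigma> i)) = (\<Sum>\<sigma>\<in>{\<sigma>. \<sigma> permutes A}. g (\<sigma> i'))"
  using sum_permutations_compose_right[OF permutes_swap_id[OF assms(2,1)], of "\<lambda>\<sigma>. g (\<sigma> i)"]
  by simp

lemma perm_off:
  assumes "i \<in> A" "j \<in> A" "i' \<in> A" "j' \<in> A" "i \<noteq> j" "i' \<noteq> j'"
  shows "(\<Sum>\<sigma>\<in>{\<sigma>. \<sigma> permutes A}. g (\<sigma> i) (\<sigma> j)) = (\<Sum>\<sigma>\<in>{\<sigma>. \<sigma> permutes A}. g (\<sigma> i') (\<sigma> j'))"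
proof -
  define b where "b = Transposition.transpose i i' j'"
  have bA: "b \<in> A" unfolding b_def using assms by (auto simp: Transposition.transpose_def)
  have bi: "b \<noteq> i" unfolding b_def using assms by (auto simp: Transposition.transpose_def)
  define q where "q = Transposition.transpose i i' \<circ> Transposition.transpose j b"
  have qp: "q permutes A" unfolding q_def
    by (intro permutes_compose permutes_swap_id) (use assms bA in auto)
  have qi: "q i = i'" unfolding q_def using bi assms by simp
  have qj: "q j = j'" unfolding q_def by (simp add: b_def)
  show ?thesis
    using sum_permutations_compose_right[OF qp, of "\<lambda>\<sigma>. g (\<sigma> i) (\<sigma> j)"] qi qj by simp
qed

definition wgt :: "nat \<Rightarrow> nat \<Rightarrow> nat \<Rightarrow> real" where
  "wgt d i j = Re (stellar_lambda d i * cnj (stellar_lambda d j))"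

lemma wgt_diag: "wgt d i i = 1"
proof -
  have "stellar_lambda d i * cnj (stellar_lambda d i) = 1"
    unfolding stellar_lambda_def by (simp add: cis_cnj cis_mult)
  thus ?thesis unfolding wgt_def by simp
qed

lemma wgt_total:
  assumes "d \<ge> 2"
  shows "(\<Sum>i=1..d. \<Sum>j=1..d. wgt d i j) = 0"
  using norm_sq_expand[of "stellar_lambda d" "\<lambda>_. 1" "{1..d}"] lam_sum[OF assms]
  by (simp add: wgt_def)

lemma average:
  assumes d2: "d \<ge> 2" and p: "p \<in> prob_simplex d"
  shows "(\<Sum>\<sigma>\<in>{\<sigma>. \<sigma> permutes {1..d}}. (cmod (\<Sum>i=1..d. stellar_lambda d i * complex_of_real (p (\<sigma> i))))^2)
     = fact d * (\<Sum>i=1..d. (p i)^2) - fact d * (1 - (\<Sum>i=1..d. (p i)^2)) / (real d - 1)"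
proof -
  let ?A = "{1..d}"
  let ?P = "{\<sigma>. \<sigma> permutes ?A}"
  define N :: real where "N = fact d"
  define S where "S = (\<Sum>i=1..d. (p i)^2)"
  have cardP: "real (card ?P) = N" unfolding N_def using card_permutations[of ?A d] by simp
  have finP: "finite ?P" by (simp add: finite_permutations)
  have p1: "(\<Sum>i=1..d. p i) = 1" using p by (simp add: prob_simplex_def)
  have sp1: "(\<Sum>i\<in>?A. p (\<sigma> i)) = 1" if "\<sigma> \<in> ?P" for \<sigma>
    using sum.permute[of \<sigma> ?A p] that p1 by (simp add: comp_def)
  have sp2: "(\<Sum>i\<in>?A. p (\<sigma> i) * p (\<sigma> i)) = S" if "\<sigma> \<in> ?P" for \<sigma>
    using sum.permute[of \<sigma> ?A "\<lambda>x. p x * p x"] that by (simp add: comp_def S_def power2_eq_square)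
  define T where "T i j = (\<Sum>\<sigma>\<in>?P. p (\<sigma> i) * p (\<sigma> j))" for i j
  define D where "D = T 1 1"
  define t where "t = T 1 2"
  have Teq: "T i j = (if i = j then D else t)" if "i \<in> ?A" "j \<in> ?A" for i j
  proof (cases "i = j")
    case True
    then show ?thesis unfolding T_def D_def
      using perm_diag[of i ?A 1 "\<lambda>x. p x * p x"] that d2 by simp
  next
    case False
    then show ?thesis unfolding T_def t_def
      using perm_off[of i ?A j 1 2 "\<lambda>x y. p x * p y"] that d2 by simp
  qed
  have "(\<Sum>\<sigma>\<in>?P. (cmod (\<Sum>i=1..d. stellar_lambda d i * complex_of_real (p (\<sigma> i))))^2)
      = (\<Sum>\<sigma>\<in>?P. \<Sum>i\<in>?A. \<Sum>j\<in>?A. wgt d i j * p (\<sigma> i) * p (\<sigma> j))"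
    by (simp add: norm_sq_expand wgt_def)
  also have "\<dots> = (\<Sum>i\<in>?A. \<Sum>j\<in>?A. wgt d i j * T i j)"
    unfolding T_def sum_distrib_left
    apply (rule trans[OF sum.swap])
    apply (rule sum.cong[OF refl])
    apply (rule trans[OF sum.swap])
    by (simp add: mult.assoc)
  also have "\<dots> = (\<Sum>i\<in>?A. \<Sum>j\<in>?A. wgt d i j * t + (if i = j then D - t else 0))"
    by (intro sum.cong refl) (auto simp: Teq wgt_diag)
  also have "\<dots> = t * 0 + real d * (D - t)"
    using wgt_total[OF d2] by (simp add: sum.distrib sum_distrib_left[symmetric] mult.commute)
  finally have X: "(\<Sum>\<sigma>\<in>?P. (cmod (\<Sum>i=1..d. stellar_lambda d i * complex_of_real (p (\<sigma> i))))^2)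
      = real d * (D - t)" by simp
  have "N = (\<Sum>\<sigma>\<in>?P. (\<Sum>i\<in>?A. p (\<sigma> i)) * (\<Sum>j\<in>?A. p (\<sigma> j)))"
    using cardP sp1 by simp
  also have "\<dots> = (\<Sum>i\<in>?A. \<Sum>j\<in>?A. T i j)"
    unfolding T_def sum_product
    apply (rule trans[OF sum.swap])
    apply (rule sum.cong[OF refl])
    by (rule sum.swap)
  also have "\<dots> = (\<Sum>i\<in>?A. \<Sum>j\<in>?A. t + (if i = j then D - t else 0))"
    by (intro sum.cong refl) (auto simp: Teq)
  also have "\<dots> = real d * real d * t + real d * (D - t)"
    by (simp add: sum.distrib algebra_simps)
  finally have N1: "N = real d * real d * t + real d * (D - t)" .
  have "N * S = (\<Sum>\<sigma>\<in>?P. \<Sum>i\<in>?A. p (\<sigma> i) * p (\<sigma> i))"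
    using cardP sp2 by simp
  also have "\<dots> = (\<Sum>i\<in>?A. T i i)"
    unfolding T_def by (rule sum.swap)
  also have "\<dots> = real d * D"
    by (simp add: Teq)
  finally have N2: "N * S = real d * D" .
  have dm: "real d - 1 > 0" using d2 by simp
  have "real d * (D - t) = N * S - N * (1 - S) / (real d - 1)"
    using N1 N2 dm by (simp add: field_simps)
  with X show ?thesis unfolding N_def S_def by simp
qed

lemma lower:
  assumes d2: "d \<ge> 2" and p: "p \<in> prob_simplex d" and s: "E_star d p \<ge> s"
  shows "s * (real d - 1) / real d \<le> 1 - (\<Sum>i=1..d. (p i)^2)"
proof -
  let ?P = "{\<sigma>. \<sigma> permutes {1..d}}"
  let ?f = "\<lambda>\<sigma>. 1 - (cmod (\<Sum>i=1..d. stellar_lambda d i * complex_of_real (p (\<sigma> i))))^2"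
  define S where "S = (\<Sum>i=1..d. (p i)^2)"
  have finP: "finite ?P" by (simp add: finite_permutations)
  have cardP: "real (card ?P) = fact d" using card_permutations[of "{1..d}" d] by simp
  have le: "E_star d p \<le> ?f \<sigma>" if "\<sigma> \<in> ?P" for \<sigma>
    unfolding E_star_def using finP that by (intro Min_le) auto
  have "fact d * E_star d p \<le> (\<Sum>\<sigma>\<in>?P. ?f \<sigma>)"
    using sum_mono[of ?P "\<lambda>_. E_star d p" ?f] le cardP by simp
  also have "\<dots> = fact d - (fact d * S - fact d * (1 - S) / (real d - 1))"
    using average[OF d2 p] cardP by (simp add: sum_subtractf S_def)
  finally have A1: "fact d * E_star d p \<le> fact d - (fact d * S - fact d * (1 - S) / (real d - 1))" .
  have "fact d * s \<le> fact d * E_star d p" by (rule mult_left_mono[OF s]) simp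
  also note A1
  also have "fact d - (fact d * S - fact d * (1 - S) / (real d - 1)) = fact d * (1 - (S - (1 - S) / (real d - 1)))"
    by (simp add: right_diff_distrib)
  finally have "fact d * s \<le> fact d * (1 - (S - (1 - S) / (real d - 1)))" .
  hence "s \<le> 1 - (S - (1 - S) / (real d - 1))"
    by (simp add: mult_le_cancel_left_pos)
  moreover have dm: "real d - 1 > 0" using d2 by simp
  ultimately have "s * (real d - 1) \<le> (1 - S) * real d"
    by (simp add: field_simps)
  thus ?thesis using d2 unfolding S_def by (simp add: field_simps)
qed

theorem mainTheorem9:
  fixes d :: nat and s :: real
  assumes "d \<ge> 2" and "0 < s" and "s \<le> 1"
  shows "let V = (\<lambda>p. 1 - (\<Sum>i=1..d. (p i)^2)) ` {p \<in> prob_simplex d. E_star d p \<ge> s}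
         in s * (real d - 1) / real d \<in> V \<and> (\<forall>v\<in>V. s * (real d - 1) / real d \<le> v)"
proof -
  define t where "t = sqrt (1 - s)"
  define c where "c = (1 - t) / real d"
  have dpos: "real d > 0" using assms by simp
  have t0: "0 \<le> t" "t \<le> 1" and tt: "t^2 = 1 - s" using assms by (auto simp: t_def)
  have c0: "0 \<le> c" unfolding c_def using t0 dpos by simp
  define p where "p i = (if i \<in> {1..d} then (if i = 1 then t else 0) + c else 0)" for i
  have sumc: "(\<Sum>i=1..d. p i) = t + real d * c"
  proof -
    have "(\<Sum>i=1..d. p i) = (\<Sum>i=1..d. (if i = 1 then t else 0) + c)"
      by (intro sum.cong) (auto simp: p_def)
    also have "\<dots> = t + real d * c" using assms by (simp add: sum.distrib)
    finally show ?thesis .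
  qed
  have pS: "p \<in> prob_simplex d"
    unfolding prob_simplex_def using sumc t0 c0 dpos by (auto simp: p_def c_def)
  have Eval: "1 - (cmod (\<Sum>i=1..d. stellar_lambda d i * complex_of_real (p (\<sigma> i))))^2 = s"
    if sp: "\<sigma> permutes {1..d}" for \<sigma>
  proof -
    have iA: "inv \<sigma> 1 \<in> {1..d}" using assms permutes_in_image[OF permutes_inv[OF sp]] by simp
    have "(\<Sum>i=1..d. stellar_lambda d i * complex_of_real (p (\<sigma> i)))
        = (\<Sum>i=1..d. (if i = inv \<sigma> 1 then complex_of_real t * stellar_lambda d i else 0)
                     + complex_of_real c * stellar_lambda d i)"
    proof (intro sum.cong refl)
      fix i assume i: "i \<in> {1..d}"
      have "\<sigma> i \<in> {1..d}" using permutes_in_image[OF sp] i by simp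
      moreover have "(\<sigma> i = 1) = (i = inv \<sigma> 1)"
        using permutes_inverses[OF sp] by metis
      ultimately show "stellar_lambda d i * complex_of_real (p (\<sigma> i)) =
         (if i = inv \<sigma> 1 then complex_of_real t * stellar_lambda d i else 0) + complex_of_real c * stellar_lambda d i"
        by (auto simp: p_def algebra_simps)
    qed
    also have "\<dots> = complex_of_real t * stellar_lambda d (inv \<sigma> 1)"
      using iA lam_sum[OF assms(1)] by (simp add: sum.distrib sum_distrib_left[symmetric])
    finally have "cmod (\<Sum>i=1..d. stellar_lambda d i * complex_of_real (p (\<sigma> i))) = t"
      using t0 by (simp add: norm_mult stellar_lambda_def)
    thus ?thesis using tt by simp
  qed
  have Es: "E_star d p = s"
  proof -
    have "(\<lambda>\<sigma>. 1 - (cmod (\<Sum>i=1..d. stellar_lambda d i * complex_of_real (p (\<sigma> i))))^2)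
          ` {\<sigma>. \<sigma> permutes {1..d}} = {s}" (is "?f2 ` _ = _")
    proof -
      have "?f2 ` {\<sigma>. \<sigma> permutes {1..d}} = (\<lambda>_. s) ` {\<sigma>. \<sigma> permutes {1..d}}"
        by (rule image_cong[OF refl], rule Eval) simp
      also have "\<dots> = {s}" using permutes_id[of "{1..d}"] by blast
      finally show ?thesis .
    qed
    thus ?thesis unfolding E_star_def by simp
  qed
  have val: "1 - (\<Sum>i=1..d. (p i)^2) = s * (real d - 1) / real d"
  proof -
    have "{1..d} = insert 1 {2..d}" using assms by auto
    hence "(\<Sum>i=1..d. (p i)^2) = (p 1)^2 + (\<Sum>i=2..d. (p i)^2)" by simp
    also have "(\<Sum>i=2..d. (p i)^2) = (\<Sum>i=2..d. c^2)"
      by (intro sum.cong) (auto simp: p_def)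
    also have "\<dots> = (real d - 1) * c^2" using assms by (simp add: of_nat_diff)
    finally have "(\<Sum>i=1..d. (p i)^2) = (t + c)^2 + (real d - 1) * c^2"
      using assms by (simp add: p_def)
    moreover have "(t + c)^2 + (real d - 1)*c^2 = t^2 + (1 - t^2)/real d"
      unfolding c_def using dpos by (simp add: field_simps power2_eq_square)
    ultimately have "(\<Sum>i=1..d. (p i)^2) = 1 - s + s / real d" using tt
      by (simp add: diff_divide_distrib)
    moreover have "s * (real d - 1) / real d = s - s / real d" using dpos by (simp add: field_simps)
    ultimately show ?thesis by simp
  qed
  show ?thesis
    unfolding Let_def
  proof
    show "s * (real d - 1) / real d \<in> (\<lambda>p. 1 - (\<Sum>i=1..d. (p i)^2)) ` {p \<in> prob_simplex d. E_star d p \<ge> s}"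
      using pS Es val by (intro image_eqI[of _ _ p]) auto
    show "\<forall>v\<in>(\<lambda>p. 1 - (\<Sum>i=1..d. (p i)^2)) ` {p \<in> prob_simplex d. E_star d p \<ge> s}. s * (real d - 1) / real d \<le> v"
      using lower[OF assms(1)] by auto
  qed
qed
end
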